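(* Let $X$ be a non-negative random variable with CDF $F$ which is DDA, i.e. its quantile function $F^{-1}$ is star-shaped: $p\mapsto F^{-1}(p)/p$ is increasing on $(0,1)$. Let $1\le i\le n$ and $1\le j\le m$ be integers and define, for $x\in[0,1]$, $$Z(x)=\frac{i}{n+1}\left(1-F_{B_{i+1:n+1}}(x)\right)-\frac{j}{m+1}\left(1-F_{B_{j+1:m+1}}(x)\right),$$ where $F_{B_{k:N}}$ denotes the CDF of the $\mathrm{beta}(k,N-k+1)$ distribution. Let $R$ be the set of solutions $x\in(0,1)$ of the equation $$x^{\,i-j}(1-x)^{(n-i)-(m-j)}=\frac{\mathcal{B}(i,n-i+1)}{\mathcal{B}(j,m-j+1)},$$ where $\mathcal{B}$ is the beta function. If $Z(r)\geq 0$ for every $r\in R$, then $X_{i:n}\geq_{ss}X_{j:m}$.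
   Context: $F^{-1}(p)=\inf\{x:F(x)\ge p\}$. $X_{k:N}$ is the $k$-th order statistic of an i.i.d. sample of size $N$ from $F$. A function $u:[0,\infty)\to[0,\infty)$ with $u(0)=0$ is star-shaped if $u(x)/x$ is increasing on $(0,\infty)$. For non-negative random variables $V,W$, $V\geq_{ss}W$ means $\mathbb{E}\,u(V)\geq\mathbb{E}\,u(W)$ for every star-shaped $u$ for which the expectations exist. "Increasing" means non-decreasing. *)

theory Defs
  imports "HOL-Probability.Probability"
begin

definition quantile :: "(real \<Rightarrow> real) \<Rightarrow> real \<Rightarrow> real" where
  "quantile F p = Inf {x. F x \<ge> p}"

definition DDA :: "(real \<Rightarrow> real) \<Rightarrow> bool" where
  "DDA F \<longleftrightarrow> (\<forall>p q. 0 < p \<and> p \<le> q \<and> q < 1 \<longrightarrow> quantile F p / p \<le> quantile F q / q)"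

definition star_shaped_fun :: "(real \<Rightarrow> real) \<Rightarrow> bool" where
  "star_shaped_fun u \<longleftrightarrow> u 0 = 0 \<and> (\<forall>x\<ge>0. u x \<ge> 0) \<and>
     (\<forall>x y. 0 < x \<and> x \<le> y \<longrightarrow> u x / x \<le> u y / y)"

(* V \<ge>_ss W, for the distributions V, W (measures on the reals) of non-negative r.v.s *)
definition ss_ge :: "real measure \<Rightarrow> real measure \<Rightarrow> bool" where
  "ss_ge V W \<longleftrightarrow> (\<forall>u. star_shaped_fun u \<and> integrable V u \<and> integrable W u \<longrightarrow>
      (\<integral>x. u x \<partial>V) \<ge> (\<integral>x. u x \<partial>W))"

(* k-th order statistic (k = 1..N) of the sample x 0, ..., x (N-1) *)
definition order_stat :: "nat \<Rightarrow> nat \<Rightarrow> (nat \<Rightarrow> real) \<Rightarrow> real" where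
  "order_stat k N x = sort (map x [0..<N]) ! (k - 1)"

(* distribution of X_{k:N} for an i.i.d. sample of size N from the law D *)
definition order_stat_distr :: "real measure \<Rightarrow> nat \<Rightarrow> nat \<Rightarrow> real measure" where
  "order_stat_distr D k N = distr (PiM {..<N} (\<lambda>_. D)) borel (order_stat k N)"

definition beta_cdf :: "real \<Rightarrow> real \<Rightarrow> real \<Rightarrow> real" where
  "beta_cdf a b x =
     (if x \<le> 0 then 0 else if x \<ge> 1 then 1 else
      (LBINT t=0..x. t powr (a - 1) * (1 - t) powr (b - 1)) / Beta a b)"

definition F_B :: "nat \<Rightarrow> nat \<Rightarrow> real \<Rightarrow> real" where
  "F_B k N x = beta_cdf (real k) (real N - real k + 1) x"

end

theory Submission
  imports Defs
begin

definition G :: "nat \<Rightarrow> nat \<Rightarrow> real \<Rightarrow> real" where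
  "G k N x = (\<Sum>l\<in>{k..N}. real (N choose l) * x ^ l * (1 - x) ^ (N - l))"

definition dens :: "nat \<Rightarrow> nat \<Rightarrow> real \<Rightarrow> real" where
  "dens k N x = real (N choose k) * real k * x ^ (k - 1) * (1 - x) ^ (N - k)"

lemma binom_id: "k < N \<Longrightarrow> real (N choose k) * real (N - k) = real (N choose Suc k) * real (Suc k)"
proof -
  assume "k < N"
  then obtain M where N: "N = Suc M" by (cases N) auto
  have "(N - k) * (N choose k) = N * ((N - 1) choose k)" by (rule binomial_absorb_comp)
  moreover have "Suc k * (N choose Suc k) = N * ((N-1) choose k)" using Suc_times_binomial[of k M] N by simp
  ultimately have "(N choose k) * (N - k) = (N choose Suc k) * Suc k" by (simp add: mult.commute)
  then have "real ((N choose k) * (N - k)) = real ((N choose Suc k) * Suc k)" by simp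
  then show ?thesis by (simp only: of_nat_mult)
qed

lemma G_deriv: "1 \<le> k \<Longrightarrow> k \<le> N \<Longrightarrow> (G k N has_real_derivative dens k N x) (at x)"
proof (induction "N - k" arbitrary: k)
  case 0
  then have k: "k = N" by simp
  have "G k N = (\<lambda>x. x ^ N)" using k by (auto simp: G_def fun_eq_iff)
  moreover have "((\<lambda>x. x ^ N) has_real_derivative real N * x ^ (N - 1)) (at x)"
    by (rule derivative_eq_intros refl)+ simp
  ultimately show ?case using k by (simp add: dens_def)
next
  case (Suc d)
  then have kN: "k < N" by simp
  have IH: "(G (Suc k) N has_real_derivative dens (Suc k) N x) (at x)"
    using Suc by simp
  have split: "G k N = (\<lambda>x. real (N choose k) * x ^ k * (1 - x) ^ (N - k) + G (Suc k) N x)"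
    using kN by (auto simp: G_def fun_eq_iff sum.atLeast_Suc_atMost)
  have d: "((\<lambda>x. real (N choose k) * x ^ k * (1 - x) ^ (N - k)) has_real_derivative
      real (N choose k) * (real k * x ^ (k - 1)) * (1 - x) ^ (N - k)
      - real (N choose k) * x ^ k * (real (N - k) * (1 - x) ^ (N - k - 1))) (at x)"
    by (rule derivative_eq_intros refl)+ (simp add: algebra_simps)
  obtain k' where k': "k = Suc k'" using Suc by (cases k) auto
  obtain e where e: "N - k = Suc e" using kN by (metis Suc_diff_Suc)
  have e2: "N - Suc k = e" using e by simp
  have "real (N choose k) * (real k * x ^ (k - 1)) * (1 - x) ^ (N - k)
      - real (N choose k) * x ^ k * (real (N - k) * (1 - x) ^ (N - k - 1)) + dens (Suc k) N x
      = dens k N x - (real (N choose k) * real (N - k)) * x ^ k * (1 - x) ^ e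
        + real (N choose Suc k) * real (Suc k) * x ^ k * (1 - x) ^ e"
    unfolding dens_def e e2 by (simp add: algebra_simps)
  also have "\<dots> = dens k N x" unfolding binom_id[OF kN] by simp
  finally have eq: "real (N choose k) * (real k * x ^ (k - 1)) * (1 - x) ^ (N - k)
      - real (N choose k) * x ^ k * (real (N - k) * (1 - x) ^ (N - k - 1)) + dens (Suc k) N x
      = dens k N x" .
  show ?case unfolding split using DERIV_add[OF d IH] eq by simp
qed

lemma G0: "1 \<le> k \<Longrightarrow> G k N 0 = 0"
  by (auto simp: G_def intro!: sum.neutral)

lemma G1: "k \<le> N \<Longrightarrow> G k N 1 = 1"
proof -
  assume "k \<le> N"
  have "G k N 1 = (\<Sum>l\<in>{k..N}. if l = N then 1 else 0)"
    unfolding G_def by (intro sum.cong) auto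
  also have "\<dots> = 1" using \<open>k \<le> N\<close> by simp
  finally show ?thesis .
qed

lemma dens_nonneg: "0 \<le> x \<Longrightarrow> x \<le> 1 \<Longrightarrow> 0 \<le> dens k N x"
  by (simp add: dens_def)

lemma dens_shift: "1 \<le> k \<Longrightarrow> k \<le> N \<Longrightarrow>
   real k / real (N + 1) * dens (Suc k) (Suc N) x = x * dens k N x"
proof -
  assume k: "1 \<le> k" "k \<le> N"
  obtain k' where k': "k = Suc k'" using k by (cases k) auto
  have c: "real (Suc N choose Suc k) * real (Suc k) = real (Suc N) * real (N choose k)"
    by (metis Suc_times_binomial of_nat_mult mult.commute)
  have "dens (Suc k) (Suc N) x = (real (Suc N choose Suc k) * real (Suc k)) * x ^ k * (1 - x) ^ (N - k)"
    by (simp add: dens_def)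
  also have "\<dots> = real (Suc N) * real (N choose k) * x ^ k * (1 - x) ^ (N - k)" unfolding c ..
  finally have d1: "dens (Suc k) (Suc N) x = real (Suc N) * real (N choose k) * x ^ k * (1 - x) ^ (N - k)" .
  have d2: "x * dens k N x = real (N choose k) * real k * x ^ k * (1 - x) ^ (N - k)"
    unfolding dens_def k' by (simp add: algebra_simps)
  show ?thesis unfolding d1 d2 by (simp add: field_simps)
qed

lemma Beta_val: "1 \<le> k \<Longrightarrow> k \<le> N \<Longrightarrow> Beta (real k) (real N - real k + 1) = 1 / (real (N choose k) * real k)"
proof -
  assume k: "1 \<le> k" "k \<le> N"
  have g1: "Gamma (real k) = fact (k - 1)" using k Gamma_fact[of "k - 1"] by (simp add: of_nat_diff)
  have g2: "Gamma (real N - real k + 1) = fact (N - k)" using k Gamma_fact[of "N - k"] by (simp add: of_nat_diff add.commute)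
  have g3: "Gamma (real k + (real N - real k + 1)) = fact N" using Gamma_fact[of N] by (simp add: add.commute)
  have b: "real (N choose k) = fact N / (fact k * fact (N - k))" using k by (simp add: binomial_fact)
  have fk: "(fact k :: real) = real k * fact (k - 1)" using k by (metis fact_nonzero fact_num_eq_if of_nat_fact nat_le_iff_add One_nat_def not_one_le_zero)
  show ?thesis unfolding Beta_def g1 g2 g3 b fk using k by (simp add: field_simps)
qed

lemma FB_eq_G:
  assumes k: "1 \<le> k" "k \<le> N" and r: "0 < r" "r < 1"
  shows "beta_cdf (real k) (real N - real k + 1) r = G k N r"
proof -
  define c where "c = real (N choose k) * real k"
  have c0: "c > 0" using k by (simp add: c_def)
  have "(LBINT t=0..r. t powr (real k - 1) * (1 - t) powr (real N - real k + 1 - 1))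
      = (LBINT t=0..r. t ^ (k - 1) * (1 - t) ^ (N - k))"
  proof (rule interval_integral_cong, goal_cases)
    case (1 t)
    then have t: "0 < t" "t < 1" using r by (auto simp: einterval_def min_def max_def split: if_splits)
    have e1: "real k - 1 = real (k - 1)" using k by (simp add: of_nat_diff)
    have e2: "real N - real k + 1 - 1 = real (N - k)" using k by (simp add: of_nat_diff)
    show ?case
      unfolding e1 e2 using t by (simp add: powr_realpow)
  qed
  also have "\<dots> = (LBINT t=ereal 0..ereal r. t ^ (k - 1) * (1 - t) ^ (N - k))"
    by (simp add: zero_ereal_def)
  also have "\<dots> = G k N r / c - G k N 0 / c"
  proof (rule interval_integral_FTC_finite)
    show "continuous_on {min 0 r..max 0 r} (\<lambda>t. t ^ (k - 1) * (1 - t) ^ (N - k))"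
      by (intro continuous_intros)
    fix x
    have "((\<lambda>x. G k N x / c) has_real_derivative dens k N x / c) (at x)"
      using G_deriv[OF k] by (rule DERIV_cdivide)
    moreover have "dens k N x / c = x ^ (k - 1) * (1 - x) ^ (N - k)"
      using c0 k by (simp add: dens_def c_def)
    ultimately show "((\<lambda>x. G k N x / c) has_vector_derivative x ^ (k - 1) * (1 - x) ^ (N - k))
        (at x within {min 0 r..max 0 r})"
      by (simp add: has_real_derivative_iff_has_vector_derivative[symmetric] has_field_derivative_at_within)
  qed
  finally have I: "(LBINT t=0..r. t powr (real k - 1) * (1 - t) powr (real N - real k + 1 - 1)) = G k N r / c"
    using G0[OF k(1)] by simp
  show ?thesis unfolding beta_cdf_def using r I Beta_val[OF k] c0 k by (simp add: c_def)
qed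

lemma FB_eq_G': "1 \<le> k \<Longrightarrow> k \<le> N \<Longrightarrow> 0 < r \<Longrightarrow> r < 1 \<Longrightarrow> F_B (Suc k) (Suc N) r = G (Suc k) (Suc N) r"
  unfolding F_B_def using FB_eq_G[of "Suc k" "Suc N" r] by simp

lemma R_eq:
  assumes ij: "1 \<le> i" "i \<le> n" "1 \<le> j" "j \<le> m" and r: "0 < r" "r < 1"
    and D: "dens i n r = dens j m r"
  shows "r powr (real i - real j) * (1 - r) powr ((real n - real i) - (real m - real j))
      = Beta (real i) (real n - real i + 1) / Beta (real j) (real m - real j + 1)"
proof -
  define ci where "ci = real (n choose i) * real i"
  define cj where "cj = real (m choose j) * real j"
  have ci: "ci > 0" "cj > 0" using ij by (auto simp: ci_def cj_def)
  have p1: "r powr (real i - real j) = r ^ (i - 1) / r ^ (j - 1)"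
  proof -
    have "real i - real j = real (i - 1) - real (j - 1)" using ij by (simp add: of_nat_diff)
    then show ?thesis using r by (simp add: powr_diff powr_realpow)
  qed
  have p2: "(1 - r) powr ((real n - real i) - (real m - real j)) = (1 - r) ^ (n - i) / (1 - r) ^ (m - j)"
  proof -
    have "(real n - real i) - (real m - real j) = real (n - i) - real (m - j)" using ij by (simp add: of_nat_diff)
    then show ?thesis using r by (simp add: powr_diff powr_realpow)
  qed
  have D': "ci * (r ^ (i - 1) * (1 - r) ^ (n - i)) = cj * (r ^ (j - 1) * (1 - r) ^ (m - j))"
    using D by (simp add: dens_def ci_def cj_def mult.assoc)
  have pos: "r ^ (j - 1) * (1 - r) ^ (m - j) > 0" using r by simp
  have "r powr (real i - real j) * (1 - r) powr ((real n - real i) - (real m - real j))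
      = (r ^ (i - 1) * (1 - r) ^ (n - i)) / (r ^ (j - 1) * (1 - r) ^ (m - j))"
    unfolding p1 p2 by simp
  also have "\<dots> = cj / ci" using D' ci pos r by (simp add: field_simps)
  also have "\<dots> = Beta (real i) (real n - real i + 1) / Beta (real j) (real m - real j + 1)"
    using Beta_val[of i n] Beta_val[of j m] ij ci by (simp add: ci_def cj_def)
  finally show ?thesis .
qed

definition Zf :: "nat \<Rightarrow> nat \<Rightarrow> nat \<Rightarrow> nat \<Rightarrow> real \<Rightarrow> real" where
  "Zf i n j m x = real i / real (n + 1) * (1 - G (Suc i) (Suc n) x)
     - real j / real (m + 1) * (1 - G (Suc j) (Suc m) x)"

lemma Z_deriv:
  assumes ij: "1 \<le> i" "i \<le> n" "1 \<le> j" "j \<le> m"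
  shows "(Zf i n j m has_real_derivative x * (dens j m x - dens i n x)) (at x)"
proof -
  have d: "(Zf i n j m has_real_derivative
     real i / real (n + 1) * (0 - dens (Suc i) (Suc n) x) - real j / real (m + 1) * (0 - dens (Suc j) (Suc m) x)) (at x)"
    unfolding Zf_def
    by (intro DERIV_diff DERIV_cmult G_deriv DERIV_const) (use ij in auto)
  have "real i / real (n + 1) * (0 - dens (Suc i) (Suc n) x) - real j / real (m + 1) * (0 - dens (Suc j) (Suc m) x)
     = x * (dens j m x - dens i n x)"
    using dens_shift[of i n x] dens_shift[of j m x] ij by (simp add: algebra_simps)
  then show ?thesis using d by simp
qed

lemma Z_cont: "1 \<le> i \<Longrightarrow> i \<le> n \<Longrightarrow> 1 \<le> j \<Longrightarrow> j \<le> m \<Longrightarrow> continuous_on S (Zf i n j m)"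
  using Z_deriv by (meson DERIV_isCont continuous_at_imp_continuous_on)

lemma Z1: "i \<le> n \<Longrightarrow> j \<le> m \<Longrightarrow> Zf i n j m 1 = 0"
  by (simp add: Zf_def G1)

lemma Z0: "Zf i n j m 0 = real i / real (n + 1) - real j / real (m + 1)"
  by (simp add: Zf_def G0)

lemma dens_cont: "continuous_on S (dens k N)"
  unfolding dens_def by (intro continuous_intros)

lemma dens_isCont: "isCont (dens k N) x"
  unfolding dens_def by (intro continuous_intros)

lemma W_deriv: "1 \<le> i \<Longrightarrow> i \<le> n \<Longrightarrow> 1 \<le> j \<Longrightarrow> j \<le> m \<Longrightarrow>
   ((\<lambda>x. G j m x - G i n x) has_real_derivative (dens j m x - dens i n x)) (at x)"
  by (intro DERIV_diff G_deriv) auto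

lemma Z_nonneg:
  assumes ij: "1 \<le> i" "i \<le> n" "1 \<le> j" "j \<le> m"
    and hR: "\<And>r. 0 < r \<Longrightarrow> r < 1 \<Longrightarrow> dens i n r = dens j m r \<Longrightarrow> 0 \<le> Zf i n j m r"
    and x: "0 \<le> x" "x \<le> 1"
  shows "0 \<le> Zf i n j m x"
proof (rule ccontr)
  define Z where "Z = Zf i n j m"
  define D where "D = (\<lambda>x. dens j m x - dens i n x)"
  have Zd: "\<And>x. (Z has_real_derivative x * D x) (at x)" unfolding Z_def D_def using Z_deriv[OF ij] .
  have Zc: "continuous_on S Z" for S unfolding Z_def using Z_cont[OF ij] .
  have Dc: "continuous_on S D" for S unfolding D_def by (intro continuous_intros dens_cont)
  have Dc': "isCont D x" for x unfolding D_def by (intro continuous_intros dens_isCont)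
  have Z1': "Z 1 = 0" unfolding Z_def using Z1 ij by simp
  assume "\<not> 0 \<le> Zf i n j m x"
  then have Zx: "Z x < 0" unfolding Z_def by simp
  obtain y where y: "y \<in> {0..1}" and ymin: "\<And>z. z \<in> {0..1} \<Longrightarrow> Z y \<le> Z z"
    using continuous_attains_inf[of "{0..1::real}" Z] Zc by auto
  have Zy: "Z y < 0" using ymin[of x] x Zx by auto
  have y1: "y \<noteq> 1" using Zy Z1' by auto
  have y0: "y = 0"
  proof (rule ccontr)
    assume "y \<noteq> 0"
    then have yy: "0 < y" "y < 1" using y y1 by auto
    have "y * D y = 0"
    proof (rule DERIV_local_min[OF Zd])
      show "0 < min y (1 - y)" using yy by simp
      show "\<forall>z. \<bar>y - z\<bar> < min y (1 - y) \<longrightarrow> Z y \<le> Z z"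
        by (auto intro!: ymin simp: abs_if split: if_splits)
    qed
    then have "D y = 0" using yy by simp
    then have "0 \<le> Z y" using hR[OF yy] unfolding D_def Z_def by simp
    then show False using Zy by simp
  qed
  have Z0neg: "real i / real (n + 1) < real j / real (m + 1)"
    using Zy y0 Z0[of i n j m] unfolding Z_def by simp
  define ci where "ci = real (n choose i) * real i"
  define cj where "cj = real (m choose j) * real j"
  have ci: "ci > 0" "cj > 0" using ij by (auto simp: ci_def cj_def)
  consider "i < j" | "j \<le> i" "n - i \<le> m - j" | "j \<le> i" "m - j < n - i" by linarith
  then show False
  proof cases
    case 1
    define g where "g = (\<lambda>x::real. cj * x ^ (j - i) * (1 - x) ^ (m - j) - ci * (1 - x) ^ (n - i))"
    have "g \<midarrow>0\<rightarrow> g 0" unfolding g_def by (intro tendsto_intros)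
    moreover have "g 0 < 0" using 1 ci by (simp add: g_def power_0_left)
    ultimately obtain r where r: "0 < r" "\<And>x. x \<noteq> 0 \<Longrightarrow> \<bar>0 - x\<bar> < r \<Longrightarrow> g x < 0"
      using LIM_fun_less_zero by blast
    have Dneg: "D x < 0" if "0 < x" "x < r" for x
    proof -
      have "D x = x ^ (i - 1) * g x"
        unfolding D_def g_def dens_def ci_def cj_def using 1 ij
        by (simp add: algebra_simps power_add[symmetric])
      moreover have "g x < 0" using r that by auto
      ultimately show ?thesis using that by (simp add: mult_pos_neg)
    qed
    define d where "d = min (r / 2) (1 / 2)"
    have d: "0 < d" "d < r" "d \<le> 1" using r by (auto simp: d_def)
    obtain z where z: "0 < z" "z < d" "Z d - Z 0 = (d - 0) * (z * D z)"
      using MVT2[of 0 d Z "\<lambda>x. x * D x"] Zd d by auto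
    have "z * D z < 0" using Dneg[of z] z d by (simp add: mult_pos_neg)
    then have "d * (z * D z) < 0" using d(1) by (rule mult_pos_neg[rotated])
    then have "Z d < Z 0" using z(3) by simp
    then show False using ymin[of d] y0 d by auto
  next
    case 2
    have a: "real j \<le> real i" using 2 by simp
    have "real (n - i) \<le> real (m - j)" using 2 by simp
    then have bb: "real n - real i \<le> real m - real j" using ij by (simp add: of_nat_diff)
    have "real j * real (n + 1) = real j * (real n - real i + 1) + real j * real i"
      by (simp add: algebra_simps)
    also have "\<dots> \<le> real i * (real n - real i + 1) + real j * real i"
      using a ij by (intro add_mono mult_right_mono) auto
    also have "\<dots> \<le> real i * (real m - real j + 1) + real i * real j"
      using bb by (intro add_mono mult_left_mono) auto
    also have "\<dots> = real i * real (m + 1)" by (simp add: algebra_simps)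
    finally have "real j * real (n + 1) \<le> real i * real (m + 1)" .
    then have "real j / real (m + 1) \<le> real i / real (n + 1)"
      by (simp add: field_simps)
    then show False using Z0neg by simp
  next
    case 3
    define g where "g = (\<lambda>x::real. cj * x ^ (j - 1) - ci * x ^ (i - 1) * (1 - x) ^ (n - i - (m - j)))"
    have "g \<midarrow>1\<rightarrow> g 1" unfolding g_def by (intro tendsto_intros)
    moreover have "g 1 > 0"
    proof -
      have "n - i - (m - j) \<noteq> 0" using 3 by linarith
      then have p: "(0::real) ^ (n - i - (m - j)) = 0" by (simp add: power_0_left)
      show ?thesis using ci by (simp del: diff_diff_left add: g_def p)
    qed
    ultimately obtain r where r: "0 < r" "\<And>x. x \<noteq> 1 \<Longrightarrow> \<bar>1 - x\<bar> < r \<Longrightarrow> 0 < g x"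
      using LIM_fun_gt_zero by blast
    have Dpos: "D x > 0" if "1 - r < x" "x < 1" for x
    proof -
      have "D x = (1 - x) ^ (m - j) * g x"
        unfolding D_def g_def dens_def ci_def cj_def using 3 ij
        by (simp add: algebra_simps power_add[symmetric])
      moreover have "g x > 0" using r that by auto
      ultimately show ?thesis using that by simp
    qed
    define b where "b = max (1 - r / 2) (1 / 2)"
    have b: "0 < b" "b < 1" "1 - r < b" using r by (auto simp: b_def)
    have "\<exists>x1. 0 < x1 \<and> x1 < 1 \<and> D x1 < 0"
    proof (rule ccontr)
      assume "\<not> ?thesis"
      then have Dnn: "\<And>x. 0 < x \<Longrightarrow> x < 1 \<Longrightarrow> 0 \<le> D x" by force
      define W where "W = (\<lambda>x. G j m x - G i n x)"
      have Wd: "\<And>x. (W has_real_derivative D x) (at x)" unfolding W_def D_def using W_deriv[OF ij] .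
      obtain z1 where z1: "0 < z1" "z1 < b" "W b - W 0 = (b - 0) * D z1"
        using MVT2[of 0 b W D] Wd b by auto
      obtain z2 where z2: "b < z2" "z2 < 1" "W 1 - W b = (1 - b) * D z2"
        using MVT2[of b 1 W D] Wd b by auto
      have "W b - W 0 \<ge> 0" using z1 Dnn[of z1] b by simp
      moreover have "W 1 - W b > 0" using z2 Dpos[of z2] b by simp
      moreover have "W 0 = 0" "W 1 = 0" unfolding W_def using G0 G1 ij by auto
      ultimately show False by simp
    qed
    then obtain x1 where x1: "0 < x1" "x1 < 1" "D x1 < 0" by blast
    obtain y2 where y2: "y2 \<in> {x1..1}" and y2min: "\<And>z. z \<in> {x1..1} \<Longrightarrow> Z y2 \<le> Z z"
      using continuous_attains_inf[of "{x1..1::real}" Z] Zc x1 by auto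
    have x1b: "x1 < b"
    proof (rule ccontr)
      assume "\<not> x1 < b"
      then show False using Dpos[of x1] x1 b by simp
    qed
    obtain z3 where z3: "b < z3" "z3 < 1" "Z 1 - Z b = (1 - b) * (z3 * D z3)"
      using MVT2[of b 1 Z "\<lambda>x. x * D x"] Zd b by auto
    have "(1 - b) * (z3 * D z3) > 0" using z3 Dpos[of z3] b by (intro mult_pos_pos) auto
    then have Zb: "Z b < 0" using z3(3) Z1' by simp
    have "Z y2 \<le> Z b" using y2min[of b] x1b b by simp
    then have Zy2: "Z y2 < 0" using Zb by simp
    have y21: "y2 \<noteq> 1" using Zy2 Z1' by auto
    have y2x1: "y2 \<noteq> x1"
    proof
      assume "y2 = x1"
      obtain d where d: "d > 0" "\<And>h. h > 0 \<Longrightarrow> h < d \<Longrightarrow> Z x1 > Z (x1 + h)"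
        using DERIV_neg_dec_right[OF Zd[of x1]] x1 by (auto simp: mult_pos_neg)
      define h where "h = min (d / 2) ((1 - x1) / 2)"
      have h: "h > 0" "h < d" "x1 + h \<le> 1" using d(1) x1(1,2) unfolding h_def by (auto simp: min_def field_simps)
      have "Z x1 > Z (x1 + h)" using d h by auto
      moreover have "Z y2 \<le> Z (x1 + h)" using y2min[of "x1 + h"] h by simp
      ultimately show False using \<open>y2 = x1\<close> by simp
    qed
    have yy: "x1 < y2" "y2 < 1" using y2 y21 y2x1 by auto
    have "y2 * D y2 = 0"
    proof (rule DERIV_local_min[OF Zd])
      show "0 < min (y2 - x1) (1 - y2)" using yy by simp
      show "\<forall>z. \<bar>y2 - z\<bar> < min (y2 - x1) (1 - y2) \<longrightarrow> Z y2 \<le> Z z"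
        by (auto intro!: y2min simp: abs_if split: if_splits)
    qed
    then have "D y2 = 0" using yy x1 by simp
    then have "0 \<le> Z y2" using hR[of y2] yy x1 unfolding D_def Z_def by simp
    then show False using Zy2 by simp
  qed
qed

lemma sorted_nth_le_iff:
  fixes s :: "real list"
  assumes "sorted s" "1 \<le> k" "k \<le> length s"
  shows "s ! (k - 1) \<le> x \<longleftrightarrow> k \<le> length (filter (\<lambda>y. y \<le> x) s)"
  using assms
proof (induction s arbitrary: k)
  case Nil then show ?case by simp
next
  case (Cons a t)
  have all: "\<forall>y\<in>set t. a \<le> y" using Cons.prems(1) by simp
  show ?case
  proof (cases "k = 1")
    case True
    show ?thesis
    proof (cases "a \<le> x")
      case True then show ?thesis using \<open>k = 1\<close> by simp
    next
      case False
      then have "filter (\<lambda>y. y \<le> x) t = []" using all by (auto simp: filter_empty_conv)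
      then show ?thesis using False \<open>k = 1\<close> by simp
    qed
  next
    case False
    then obtain k' where k': "k = Suc k'" "1 \<le> k'" using Cons.prems by (cases k) auto
    have IH: "t ! (k' - 1) \<le> x \<longleftrightarrow> k' \<le> length (filter (\<lambda>y. y \<le> x) t)"
      using Cons.IH[of k'] Cons.prems k' by simp
    have nth: "(a # t) ! (k - 1) = t ! (k' - 1)" using k' by (cases k') auto
    show ?thesis
    proof (cases "a \<le> x")
      case True then show ?thesis using IH nth k' by simp
    next
      case False
      then have "filter (\<lambda>y. y \<le> x) t = []" using all by (auto simp: filter_empty_conv)
      moreover have "a \<le> t ! (k' - 1)" using all k' Cons.prems by auto
      ultimately show ?thesis using False nth k' by simp
    qed
  qed
qed

lemma order_stat_le_iff:
  assumes "1 \<le> k" "k \<le> N"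
  shows "order_stat k N \<omega> \<le> x \<longleftrightarrow> k \<le> card {l \<in> {..<N}. \<omega> l \<le> x}"
proof -
  let ?xs = "map \<omega> [0..<N]"
  have "order_stat k N \<omega> \<le> x \<longleftrightarrow> k \<le> length (filter (\<lambda>y. y \<le> x) (sort ?xs))"
    unfolding order_stat_def using assms by (intro sorted_nth_le_iff) auto
  also have "length (filter (\<lambda>y. y \<le> x) (sort ?xs)) = length (filter (\<lambda>y. y \<le> x) ?xs)"
    by (metis mset_filter mset_sort size_mset)
  also have "\<dots> = card {l \<in> {..<N}. \<omega> l \<le> x}"
    unfolding length_filter_conv_card by (intro arg_cong[where f=card]) auto
  finally show ?thesis .
qed

lemma sort_map_mono:
  fixes g :: "real \<Rightarrow> real"
  assumes "mono_on A g" "set xs \<subseteq> A"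
  shows "sort (map g xs) = map g (sort xs)"
proof -
  have "sorted (map g (sort xs))"
  proof -
    have s: "sorted_wrt (\<le>) (sort xs)" by simp
    have "sorted_wrt (\<lambda>x y. g x \<le> g y) (sort xs)"
      by (rule sorted_wrt_mono_rel[OF _ s]) (use assms in \<open>auto simp: mono_on_def\<close>)
    then show ?thesis by (simp add: sorted_map)
  qed
  moreover have "mset (map g (sort xs)) = mset (map g xs)" by simp
  ultimately show ?thesis by (metis properties_for_sort)
qed

lemma order_stat_in:
  assumes "1 \<le> k" "k \<le> N"
  shows "\<exists>l<N. order_stat k N \<omega> = \<omega> l"
proof -
  have "order_stat k N \<omega> \<in> set (sort (map \<omega> [0..<N]))"
    unfolding order_stat_def using assms by (intro nth_mem) auto
  then show ?thesis by auto
qed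

lemma order_stat_cong:
  assumes "\<And>l. l < N \<Longrightarrow> f l = g l"
  shows "order_stat k N f = order_stat k N g"
proof -
  have h: "map f [0..<N] = map g [0..<N]" using assms by simp
  show ?thesis unfolding order_stat_def h ..
qed

lemma order_stat_mono_map:
  fixes g :: "real \<Rightarrow> real"
  assumes "mono_on A g" "\<And>l. l < N \<Longrightarrow> \<omega> l \<in> A" "1 \<le> k" "k \<le> N"
  shows "order_stat k N (\<lambda>l. g (\<omega> l)) = g (order_stat k N \<omega>)"
proof -
  have "sort (map (\<lambda>l. g (\<omega> l)) [0..<N]) = sort (map g (map \<omega> [0..<N]))" by (simp add: o_def)
  also have "\<dots> = map g (sort (map \<omega> [0..<N]))"
    using assms by (intro sort_map_mono) auto
  finally show ?thesis unfolding order_stat_def using assms by simp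
qed

lemma sum_subsets_card:
  fixes f :: "nat \<Rightarrow> real"
  assumes "finite A"
  shows "(\<Sum>S\<in>{S. S \<subseteq> A \<and> k \<le> card S}. f (card S)) = (\<Sum>l\<in>{k..card A}. real (card A choose l) * f l)"
proof -
  let ?SS = "{S. S \<subseteq> A \<and> k \<le> card S}"
  have fin: "finite ?SS" using assms by (simp add: finite_Collect_subsets)
  have "(\<Sum>S\<in>?SS. f (card S)) = (\<Sum>l\<in>{k..card A}. \<Sum>S\<in>{S \<in> ?SS. card S = l}. f (card S))"
    using fin assms by (intro sum.group[symmetric]) (auto intro: card_mono)
  also have "\<dots> = (\<Sum>l\<in>{k..card A}. real (card A choose l) * f l)"
  proof (intro sum.cong refl)
    fix l assume l: "l \<in> {k..card A}"
    have eq: "{S \<in> ?SS. card S = l} = {S. S \<subseteq> A \<and> card S = l}" using l by auto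
    have "(\<Sum>S\<in>{S \<in> ?SS. card S = l}. f (card S)) = (\<Sum>S\<in>{S. S \<subseteq> A \<and> card S = l}. f l)"
      unfolding eq by (intro sum.cong) auto
    also have "\<dots> = real (card A choose l) * f l" using n_subsets[OF assms, of l] by simp
    finally show "(\<Sum>S\<in>{S \<in> ?SS. card S = l}. f (card S)) = real (card A choose l) * f l" .
  qed
  finally show ?thesis .
qed

definition U :: "real measure" where "U = restrict_space lborel {0<..<1}"
definition PU :: "nat \<Rightarrow> (nat \<Rightarrow> real) measure" where "PU N = PiM {..<N} (\<lambda>_. U)"
definition V :: "nat \<Rightarrow> nat \<Rightarrow> real measure" where "V k N = distr (PU N) borel (order_stat k N)"
definition dV :: "nat \<Rightarrow> nat \<Rightarrow> real measure" where
  "dV k N = density lborel (\<lambda>p. ennreal (indicator {0<..<1} p * dens k N p))"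
definition clp :: "real \<Rightarrow> real" where "clp x = max 0 (min 1 x)"

lemma space_U: "space U = {0<..<1}"
  by (simp add: U_def)

lemma sets_U: "A \<in> sets U \<longleftrightarrow> A \<subseteq> {0<..<1} \<and> A \<in> sets borel"
  unfolding U_def by (subst sets_restrict_space_iff) auto

lemma emeasure_U: "A \<in> sets U \<Longrightarrow> emeasure U A = emeasure lborel A"
  unfolding U_def by (intro emeasure_restrict_space) (auto simp: sets_U[unfolded U_def])

lemma U_prob: "prob_space U"
proof
  show "emeasure U (space U) = 1" unfolding space_U
    by (subst emeasure_U) (auto simp: sets_U)
qed

lemma PU_prob: "prob_space (PU N)"
  unfolding PU_def using U_prob by (intro prob_space_PiM) auto

lemma space_PU: "space (PU N) = PiE {..<N} (\<lambda>_. {0<..<1})"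
  by (simp add: PU_def space_PiM space_U)

lemma measure_U_le: "measure U ({..x} \<inter> {0<..<1}) = clp x"
proof -
  have "measure U ({..x} \<inter> {0<..<1}) = measure lborel ({..x} \<inter> {0<..<1})"
    unfolding measure_def by (subst emeasure_U) (auto simp: sets_U)
  also have "\<dots> = clp x"
  proof (cases "x \<le> 0")
    case True then have "{..x} \<inter> {0<..<1} = {}" by auto
    then show ?thesis using True by (simp add: clp_def)
  next
    case False
    show ?thesis
    proof (cases "x < 1")
      case True then have "{..x} \<inter> {0<..<1} = {0<..x}" using False by auto
      then show ?thesis using True False by (simp add: clp_def)
    next
      case F2: False then have "{..x} \<inter> {0<..<1} = {0<..<1}" by auto
      then show ?thesis using F2 by (simp add: clp_def)
    qed
  qed
  finally show ?thesis .
qed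

lemma measure_U_gt: "measure U ({x<..} \<inter> {0<..<1}) = 1 - clp x"
proof -
  interpret prob_space U by (rule U_prob)
  have "{x<..} \<inter> {0<..<1} = space U - ({..x} \<inter> {0<..<1})" by (auto simp: space_U)
  then have "measure U ({x<..} \<inter> {0<..<1}) = measure U (space U) - measure U ({..x} \<inter> {0<..<1})"
    by (simp add: finite_measure_compl[symmetric] sets_U)
  then show ?thesis using measure_U_le prob_space by simp
qed

definition ES :: "real \<Rightarrow> nat set \<Rightarrow> nat \<Rightarrow> real set" where
  "ES x S l = (if l \<in> S then {..x} \<inter> {0<..<1} else {x<..} \<inter> {0<..<1})"

lemma ES_sets: "ES x S l \<in> sets U"
  by (auto simp: ES_def sets_U)

lemma event_eq:
  assumes "1 \<le> k" "k \<le> N"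
  shows "{\<omega> \<in> space (PU N). order_stat k N \<omega> \<le> x}
       = (\<Union>S\<in>{S. S \<subseteq> {..<N} \<and> k \<le> card S}. PiE {..<N} (ES x S))"
proof (intro equalityI subsetI)
  fix \<omega> assume w: "\<omega> \<in> {\<omega> \<in> space (PU N). order_stat k N \<omega> \<le> x}"
  define S where "S = {l \<in> {..<N}. \<omega> l \<le> x}"
  have "k \<le> card S" using w order_stat_le_iff[OF assms] by (simp add: S_def)
  moreover have "\<omega> \<in> PiE {..<N} (ES x S)" using w by (auto simp: space_PU ES_def S_def PiE_iff)
  moreover have "S \<in> {S. S \<subseteq> {..<N} \<and> k \<le> card S}" using \<open>k \<le> card S\<close> by (auto simp: S_def)
  ultimately show "\<omega> \<in> (\<Union>S\<in>{S. S \<subseteq> {..<N} \<and> k \<le> card S}. PiE {..<N} (ES x S))"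
    by blast
next
  fix \<omega> assume "\<omega> \<in> (\<Union>S\<in>{S. S \<subseteq> {..<N} \<and> k \<le> card S}. PiE {..<N} (ES x S))"
  then obtain S where S: "S \<subseteq> {..<N}" "k \<le> card S" and w: "\<omega> \<in> PiE {..<N} (ES x S)" by auto
  have Seq: "{l \<in> {..<N}. \<omega> l \<le> x} = S"
    using w S by (auto simp: PiE_iff ES_def split: if_splits)
  have "\<omega> \<in> space (PU N)" using w by (auto simp: space_PU PiE_iff ES_def split: if_splits)
  moreover have "order_stat k N \<omega> \<le> x" using order_stat_le_iff[OF assms] Seq S by simp
  ultimately show "\<omega> \<in> {\<omega> \<in> space (PU N). order_stat k N \<omega> \<le> x}" by simp
qed

lemma ES_disj: "disjoint_family_on (\<lambda>S. PiE {..<N} (ES x S)) {S. S \<subseteq> {..<N} \<and> k \<le> card S}"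
unfolding disjoint_family_on_def
proof (intro ballI impI)
  fix S T assume S: "S \<in> {S. S \<subseteq> {..<N} \<and> k \<le> card S}" and T: "T \<in> {S. S \<subseteq> {..<N} \<and> k \<le> card S}" and "S \<noteq> T"
  show "PiE {..<N} (ES x S) \<inter> PiE {..<N} (ES x T) = {}"
  proof (rule ccontr)
    assume "PiE {..<N} (ES x S) \<inter> PiE {..<N} (ES x T) \<noteq> {}"
    then obtain \<omega> where w: "\<omega> \<in> PiE {..<N} (ES x S)" "\<omega> \<in> PiE {..<N} (ES x T)" by auto
    have "{l \<in> {..<N}. \<omega> l \<le> x} = S" using w(1) S by (auto simp: PiE_iff ES_def split: if_splits)
    moreover have "{l \<in> {..<N}. \<omega> l \<le> x} = T" using w(2) T by (auto simp: PiE_iff ES_def split: if_splits)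
    ultimately show False using \<open>S \<noteq> T\<close> by simp
  qed
qed

lemma ES_measure:
  assumes "S \<subseteq> {..<N}"
  shows "measure (PU N) (PiE {..<N} (ES x S)) = clp x ^ card S * (1 - clp x) ^ (N - card S)"
proof -
  interpret UU: prob_space U by (rule U_prob)
  interpret product_prob_space "\<lambda>_. U" by (rule product_prob_spaceI) (rule U_prob)
  have "emeasure (PU N) (PiE {..<N} (ES x S)) = (\<Prod>l\<in>{..<N}. emeasure U (ES x S l))"
    unfolding PU_def by (intro emeasure_PiM) (auto simp: ES_sets)
  also have "\<dots> = (\<Prod>l\<in>{..<N}. ennreal (if l \<in> S then clp x else 1 - clp x))"
    using U_prob by (intro prod.cong refl)
      (auto simp: ES_def UU.emeasure_eq_measure measure_U_le measure_U_gt)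
  also have "\<dots> = ennreal (\<Prod>l\<in>{..<N}. (if l \<in> S then clp x else 1 - clp x))"
    by (intro prod_ennreal) (auto simp: clp_def)
  also have "(\<Prod>l\<in>{..<N}. (if l \<in> S then clp x else 1 - clp x)) = clp x ^ card S * (1 - clp x) ^ (N - card S)"
  proof -
    have "(\<Prod>l\<in>{..<N}. (if l \<in> S then clp x else 1 - clp x))
        = (\<Prod>l\<in>{..<N} \<inter> {l. l \<in> S}. clp x) * (\<Prod>l\<in>{..<N} \<inter> - {l. l \<in> S}. 1 - clp x)"
      by (rule prod.If_cases) simp
    also have "{..<N} \<inter> {l. l \<in> S} = S" using assms by auto
    also have "{..<N} \<inter> - {l. l \<in> S} = {..<N} - S" by auto
    finally have e: "(\<Prod>l\<in>{..<N}. (if l \<in> S then clp x else 1 - clp x)) = (\<Prod>l\<in>S. clp x) * (\<Prod>l\<in>{..<N} - S. 1 - clp x)" .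
    have "card ({..<N} - S) = N - card S" using assms by (simp add: card_Diff_subset finite_subset)
    then show ?thesis unfolding e by simp
  qed
  finally show ?thesis using PU_prob
    by (simp add: clp_def measure_def)
qed

lemma event_sets:
  assumes "1 \<le> k" "k \<le> N"
  shows "{\<omega> \<in> space (PU N). order_stat k N \<omega> \<le> x} \<in> sets (PU N)"
proof -
  have "(\<Union>S\<in>{S. S \<subseteq> {..<N} \<and> k \<le> card S}. PiE {..<N} (ES x S)) \<in> sets (PU N)"
    unfolding PU_def
    by (intro sets.finite_UN sets_PiM_I_finite) (auto simp: ES_sets finite_Collect_subsets)
  then show ?thesis using event_eq[OF assms] by simp
qed

lemma order_stat_meas:
  assumes "1 \<le> k" "k \<le> N"
  shows "order_stat k N \<in> borel_measurable (PU N)"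
  by (rule borel_measurableI_le) (rule event_sets[OF assms])

lemma G_nonneg: "0 \<le> x \<Longrightarrow> x \<le> 1 \<Longrightarrow> 0 \<le> G k N x"
  unfolding G_def by (intro sum_nonneg) auto

lemma cdf_V:
  assumes "1 \<le> k" "k \<le> N"
  shows "measure (V k N) {..x} = G k N (clp x)"
proof -
  interpret prob_space "PU N" by (rule PU_prob)
  have "measure (V k N) {..x} = measure (PU N) {\<omega> \<in> space (PU N). order_stat k N \<omega> \<le> x}"
    unfolding V_def by (subst measure_distr) (auto intro: order_stat_meas[OF assms] simp: Int_def conj_commute)
  also have "\<dots> = (\<Sum>S\<in>{S. S \<subseteq> {..<N} \<and> k \<le> card S}. measure (PU N) (PiE {..<N} (ES x S)))"
    unfolding event_eq[OF assms]
    by (intro finite_measure_finite_Union ES_disj) (auto simp: finite_Collect_subsets PU_def ES_sets intro!: sets_PiM_I_finite)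
  also have "\<dots> = (\<Sum>S\<in>{S. S \<subseteq> {..<N} \<and> k \<le> card S}. clp x ^ card S * (1 - clp x) ^ (N - card S))"
    by (intro sum.cong refl ES_measure) auto
  also have "\<dots> = G k N (clp x)"
    unfolding G_def using sum_subsets_card[of "{..<N}" "\<lambda>l. clp x ^ l * (1 - clp x) ^ (N - l)" k]
    by (simp add: mult.assoc)
  finally show ?thesis .
qed

lemma nn_FTC_AE:
  fixes f F :: "real \<Rightarrow> real"
  assumes f: "f \<in> borel_measurable borel" and d: "\<And>x. x \<in> {a..b} \<Longrightarrow> DERIV F x :> f x"
    and nn: "\<And>x. x \<in> {a..b} \<Longrightarrow> 0 \<le> f x" and ab: "a \<le> b"
    and S: "AE x in lborel. (x \<in> S \<longleftrightarrow> x \<in> {a..b})"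
  shows "(\<integral>\<^sup>+x. ennreal (f x) * indicator S x \<partial>lborel) = ennreal (F b - F a)"
proof -
  have "(\<integral>\<^sup>+x. ennreal (f x) * indicator S x \<partial>lborel) = (\<integral>\<^sup>+x. ennreal (f x) * indicator {a..b} x \<partial>lborel)"
    by (rule nn_integral_cong_AE) (use S in \<open>auto simp: indicator_def\<close>)
  also have "\<dots> = ennreal (F b - F a)"
    using nn_integral_FTC_Icc[OF f d nn ab] by simp
  finally show ?thesis .
qed

lemma ae01: "AE p in lborel. p \<noteq> (0::real) \<and> p \<noteq> 1"
  using AE_lborel_singleton[of "0::real"] AE_lborel_singleton[of "1::real"] by eventually_elim auto

lemma dens_meas[measurable]: "dens k N \<in> borel_measurable borel"
  unfolding dens_def by measurable

lemma dens_int: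
  assumes k: "1 \<le> k" "k \<le> N" and c: "0 \<le> c" "c \<le> 1"
    and S: "AE p in lborel. (p \<in> S \<longleftrightarrow> p \<in> {0..c})"
  shows "(\<integral>\<^sup>+p. ennreal (dens k N p) * indicator S p \<partial>lborel) = ennreal (G k N c)"
  using nn_FTC_AE[OF dens_meas G_deriv[OF k] dens_nonneg _ S] c G0[OF k(1)] by auto

lemma wdens_int:
  assumes k: "1 \<le> k" "k \<le> N" and ab: "0 \<le> a" "a \<le> b" "b \<le> 1"
    and S: "AE p in lborel. (p \<in> S \<longleftrightarrow> p \<in> {a..b})"
  shows "(\<integral>\<^sup>+p. ennreal (p * dens k N p) * indicator S p \<partial>lborel)
     = ennreal (real k / real (N + 1) * G (Suc k) (Suc N) b - real k / real (N + 1) * G (Suc k) (Suc N) a)"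
proof (rule nn_FTC_AE[OF _ _ _ ab(2) S])
  show "(\<lambda>p. p * dens k N p) \<in> borel_measurable borel" by measurable
  fix x assume x: "x \<in> {a..b}"
  show "0 \<le> x * dens k N x" using x ab by (intro mult_nonneg_nonneg dens_nonneg) auto
  have "((\<lambda>x. real k / real (N + 1) * G (Suc k) (Suc N) x) has_real_derivative
      real k / real (N + 1) * dens (Suc k) (Suc N) x) (at x)"
    using k by (intro DERIV_cmult G_deriv) auto
  then show "((\<lambda>x. real k / real (N + 1) * G (Suc k) (Suc N) x) has_real_derivative x * dens k N x) (at x)"
    using dens_shift[OF k] by simp
qed

lemma ind_mult: "ennreal (indicator A p * d p) = ennreal (d p) * indicator A p"
  by (auto split: split_indicator)

lemma dV_emeasure_le:
  assumes k: "1 \<le> k" "k \<le> N"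
  shows "emeasure (dV k N) {..x} = ennreal (G k N (clp x))"
proof -
  have "emeasure (dV k N) {..x} = (\<integral>\<^sup>+p. ennreal (indicator {0<..<1} p * dens k N p) * indicator {..x} p \<partial>lborel)"
    unfolding dV_def by (subst emeasure_density) auto
  also have "\<dots> = (\<integral>\<^sup>+p. ennreal (dens k N p) * indicator ({0<..<1} \<inter> {..x}) p \<partial>lborel)"
    by (intro nn_integral_cong) (auto split: split_indicator)
  also have "\<dots> = ennreal (G k N (clp x))"
  proof (rule dens_int[OF k])
    show "0 \<le> clp x" "clp x \<le> 1" by (auto simp: clp_def)
    show "AE p in lborel. (p \<in> {0<..<1} \<inter> {..x} \<longleftrightarrow> p \<in> {0..clp x})"
      using ae01 by eventually_elim (auto simp: clp_def)
  qed
  finally show ?thesis .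
qed

lemma dV_real_distribution:
  assumes k: "1 \<le> k" "k \<le> N"
  shows "real_distribution (dV k N)"
proof -
  have "emeasure (dV k N) UNIV = (\<integral>\<^sup>+p. ennreal (indicator {0<..<1} p * dens k N p) \<partial>lborel)"
    unfolding dV_def by (subst emeasure_density) auto
  also have "\<dots> = (\<integral>\<^sup>+p. ennreal (dens k N p) * indicator {0<..<1} p \<partial>lborel)"
    by (intro nn_integral_cong) (auto split: split_indicator)
  also have "\<dots> = ennreal (G k N 1)"
  proof -
    have "AE p in lborel. (p \<in> {0<..<1} \<longleftrightarrow> p \<in> {0..1::real})"
      using ae01 by eventually_elim auto
    then show ?thesis by (intro dens_int[OF k]) auto
  qed
  also have "\<dots> = 1" using G1[OF k(2)] by simp
  finally have "emeasure (dV k N) UNIV = 1" .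
  then have "prob_space (dV k N)" by (intro prob_spaceI) (simp add: dV_def)
  then show ?thesis unfolding real_distribution_def real_distribution_axioms_def by (simp add: dV_def)
qed

lemma V_real_distribution:
  assumes k: "1 \<le> k" "k \<le> N"
  shows "real_distribution (V k N)"
proof -
  have "prob_space (V k N)" unfolding V_def
    by (intro prob_space.prob_space_distr PU_prob order_stat_meas[OF k])
  then show ?thesis unfolding real_distribution_def real_distribution_axioms_def by (simp add: V_def)
qed

lemma V_eq_dV:
  assumes k: "1 \<le> k" "k \<le> N"
  shows "V k N = dV k N"
proof (rule cdf_unique[OF V_real_distribution[OF k] dV_real_distribution[OF k]])
  show "cdf (V k N) = cdf (dV k N)"
  proof
    fix x
    interpret dd: real_distribution "dV k N" by (rule dV_real_distribution[OF k])
    have "measure (dV k N) {..x} = G k N (clp x)"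
      using dV_emeasure_le[OF k, of x] G_nonneg[of "clp x" k N] by (simp add: dd.emeasure_eq_measure clp_def)
    then show "cdf (V k N) x = cdf (dV k N) x" unfolding cdf_def2 using cdf_V[OF k] by simp
  qed
qed

lemma V_integral:
  assumes k: "1 \<le> k" "k \<le> N" and g: "g \<in> borel_measurable borel"
  shows "(\<integral>\<^sup>+p. g p \<partial>V k N) = (\<integral>\<^sup>+p. ennreal (indicator {0<..<1} p * dens k N p) * g p \<partial>lborel)"
  unfolding V_eq_dV[OF k] dV_def using g by (subst nn_integral_density) auto

lemma upset_int:
  assumes k: "1 \<le> k" "k \<le> N" and B: "B \<subseteq> {0<..<1}" "B \<noteq> {}"
    and up: "\<And>p q. p \<in> B \<Longrightarrow> p \<le> q \<Longrightarrow> q < 1 \<Longrightarrow> q \<in> B"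
  shows "(\<integral>\<^sup>+p. ennreal (p * dens k N p) * indicator B p \<partial>lborel)
     = ennreal (real k / real (N + 1) * (1 - G (Suc k) (Suc N) (Inf B)))"
proof -
  define a where "a = Inf B"
  have bdd: "bdd_below B" using B by (auto intro!: bdd_belowI[of _ 0])
  have a0: "0 \<le> a" unfolding a_def using B by (intro cInf_greatest) auto
  obtain p0 where p0: "p0 \<in> B" using B by auto
  have a1: "a \<le> 1" unfolding a_def using cInf_lower[OF p0 bdd] p0 B by auto
  have AE: "AE p in lborel. (p \<in> B \<longleftrightarrow> p \<in> {a..1})"
    using AE_lborel_singleton[of a] AE_lborel_singleton[of "1::real"]
  proof eventually_elim
    case (elim p)
    show ?case
    proof
      assume "p \<in> B" then show "p \<in> {a..1}" using cInf_lower[OF _ bdd] B unfolding a_def by auto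
    next
      assume p: "p \<in> {a..1}"
      then have "Inf B < p" using elim unfolding a_def by auto
      then obtain q where "q \<in> B" "q < p" using cInf_less_iff[OF B(2) bdd] by auto
      then show "p \<in> B" using up[of q p] p elim by auto
    qed
  qed
  have "(\<integral>\<^sup>+p. ennreal (p * dens k N p) * indicator B p \<partial>lborel)
     = ennreal (real k / real (N + 1) * G (Suc k) (Suc N) 1 - real k / real (N + 1) * G (Suc k) (Suc N) a)"
    by (rule wdens_int[OF k a0 a1 _ AE]) simp
  also have "\<dots> = ennreal (real k / real (N + 1) * (1 - G (Suc k) (Suc N) a))"
    using G1[of "Suc k" "Suc N"] k by (simp add: algebra_simps)
  finally show ?thesis unfolding a_def .
qed

lemma upset_compare:
  assumes ij: "1 \<le> i" "i \<le> n" "1 \<le> j" "j \<le> m"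
    and Z: "\<And>x. 0 \<le> x \<Longrightarrow> x \<le> 1 \<Longrightarrow> 0 \<le> Zf i n j m x"
    and B: "B \<subseteq> {0<..<1}"
    and up: "\<And>p q. p \<in> B \<Longrightarrow> p \<le> q \<Longrightarrow> q < 1 \<Longrightarrow> q \<in> B"
  shows "(\<integral>\<^sup>+p. ennreal (p * dens j m p) * indicator B p \<partial>lborel)
       \<le> (\<integral>\<^sup>+p. ennreal (p * dens i n p) * indicator B p \<partial>lborel)"
proof (cases "B = {}")
  case True then show ?thesis by simp
next
  case False
  define a where "a = Inf B"
  have bdd: "bdd_below B" using B by (auto intro!: bdd_belowI[of _ 0])
  have a0: "0 \<le> a" unfolding a_def using B False by (intro cInf_greatest) auto
  obtain p0 where p0: "p0 \<in> B" using False by auto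
  have a1: "a \<le> 1" unfolding a_def using cInf_lower[OF p0 bdd] p0 B by auto
  have "real j / real (m + 1) * (1 - G (Suc j) (Suc m) a) \<le> real i / real (n + 1) * (1 - G (Suc i) (Suc n) a)"
    using Z[OF a0 a1] by (simp add: Zf_def)
  moreover have "(\<integral>\<^sup>+p. ennreal (p * dens j m p) * indicator B p \<partial>lborel)
     = ennreal (real j / real (m + 1) * (1 - G (Suc j) (Suc m) a))"
    unfolding a_def using ij B False up by (intro upset_int) auto
  moreover have "(\<integral>\<^sup>+p. ennreal (p * dens i n p) * indicator B p \<partial>lborel)
     = ennreal (real i / real (n + 1) * (1 - G (Suc i) (Suc n) a))"
    unfolding a_def using ij B False up by (intro upset_int) auto
  ultimately show ?thesis by (simp add: ennreal_leI)
qed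

lemma layer_cake_compare:
  fixes h :: "real \<Rightarrow> real"
  assumes ij: "1 \<le> i" "i \<le> n" "1 \<le> j" "j \<le> m"
    and Z: "\<And>x. 0 \<le> x \<Longrightarrow> x \<le> 1 \<Longrightarrow> 0 \<le> Zf i n j m x"
    and hm[measurable]: "h \<in> borel_measurable borel"
    and h0: "\<And>p. 0 \<le> h p"
    and hmono: "\<And>p q. 0 < p \<Longrightarrow> p \<le> q \<Longrightarrow> q < 1 \<Longrightarrow> h p \<le> h q"
  shows "(\<integral>\<^sup>+p. ennreal (indicator {0<..<1} p * dens j m p) * ennreal (p * h p) \<partial>lborel)
       \<le> (\<integral>\<^sup>+p. ennreal (indicator {0<..<1} p * dens i n p) * ennreal (p * h p) \<partial>lborel)"
proof -
  define B where "B t = {p. p \<in> {0<..<1} \<and> 0 \<le> t \<and> t < h p}" for t :: real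
  have rep: "(\<integral>\<^sup>+p. ennreal (indicator {0<..<1} p * dens k N p) * ennreal (p * h p) \<partial>lborel)
      = (\<integral>\<^sup>+t. (\<integral>\<^sup>+p. ennreal (p * dens k N p) * indicator (B t) p \<partial>lborel) \<partial>lborel)"
    if k: "1 \<le> k" "k \<le> N" for k N
  proof -
    have "(\<integral>\<^sup>+p. ennreal (indicator {0<..<1} p * dens k N p) * ennreal (p * h p) \<partial>lborel)
       = (\<integral>\<^sup>+p. (\<integral>\<^sup>+t. ennreal (p * dens k N p) * indicator (B t) p \<partial>lborel) \<partial>lborel)"
    proof (intro nn_integral_cong)
      fix p :: real
      show "ennreal (indicator {0<..<1} p * dens k N p) * ennreal (p * h p)
          = (\<integral>\<^sup>+t. ennreal (p * dens k N p) * indicator (B t) p \<partial>lborel)"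
      proof (cases "p \<in> {0<..<1}")
        case False
        then show ?thesis by (auto simp: B_def indicator_def)
      next
        case True
        have "(\<integral>\<^sup>+t. ennreal (p * dens k N p) * indicator (B t) p \<partial>lborel)
            = (\<integral>\<^sup>+t. ennreal (p * dens k N p) * indicator {0..<h p} t \<partial>lborel)"
          using True by (intro nn_integral_cong) (auto simp: B_def split: split_indicator)
        also have "\<dots> = ennreal (p * dens k N p) * emeasure lborel {0..<h p}"
          by (subst nn_integral_cmult_indicator) auto
        also have "\<dots> = ennreal (p * dens k N p) * ennreal (h p)" using h0[of p] by simp
        also have "\<dots> = ennreal (indicator {0<..<1} p * dens k N p) * ennreal (p * h p)"
          using True h0[of p] dens_nonneg[of p k N]
          by (simp add: ennreal_mult[symmetric] mult_nonneg_nonneg algebra_simps)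
        finally show ?thesis by simp
      qed
    qed
    also have "\<dots> = (\<integral>\<^sup>+t. (\<integral>\<^sup>+p. ennreal (p * dens k N p) * indicator (B t) p \<partial>lborel) \<partial>lborel)"
    proof (rule lborel_pair.Fubini'[symmetric])
      have eq: "case_prod (\<lambda>p t. ennreal (p * dens k N p) * indicator (B t) p)
        = (\<lambda>x. ennreal (fst x * dens k N (fst x)) *
            (if 0 < fst x \<and> fst x < 1 \<and> 0 \<le> snd x \<and> snd x < h (fst x) then 1 else 0))"
        by (auto simp: fun_eq_iff B_def indicator_def)
      show "case_prod (\<lambda>p t. ennreal (p * dens k N p) * indicator (B t) p) \<in> borel_measurable (lborel \<Otimes>\<^sub>M lborel)"
        unfolding eq by measurable
    qed
    finally show ?thesis .
  qed
  show ?thesis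
    unfolding rep[OF ij(1,2)] rep[OF ij(3,4)]
  proof (rule nn_integral_mono)
    fix t
    show "(\<integral>\<^sup>+p. ennreal (p * dens j m p) * indicator (B t) p \<partial>lborel)
        \<le> (\<integral>\<^sup>+p. ennreal (p * dens i n p) * indicator (B t) p \<partial>lborel)"
    proof (rule upset_compare[OF ij Z])
      show "B t \<subseteq> {0<..<1}" by (auto simp: B_def)
      fix p q assume "p \<in> B t" "p \<le> q" "q < 1"
      then show "q \<in> B t" using hmono[of p q] by (auto simp: B_def)
    qed
  qed
qed

lemma quantile_props:
  fixes F :: "real \<Rightarrow> real"
  assumes mono: "\<And>x y. x \<le> y \<Longrightarrow> F x \<le> F y"
    and rc: "\<And>a. continuous (at_right a) F"
    and top: "(F \<longlongrightarrow> 1) at_top"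
    and neg: "\<And>x. x < 0 \<Longrightarrow> F x = 0"
    and p: "0 < p" "p < 1"
  shows "quantile F p \<le> x \<longleftrightarrow> p \<le> F x" and "0 \<le> quantile F p"
proof -
  define S where "S = {x. p \<le> F x}"
  have Q: "quantile F p = Inf S" by (simp add: quantile_def S_def)
  have "eventually (\<lambda>x. p < F x) at_top" using order_tendstoD(1)[OF top] p by simp
  then obtain N where "\<And>x. x \<ge> N \<Longrightarrow> p < F x" by (auto simp: eventually_at_top_linorder)
  then have ne: "S \<noteq> {}" unfolding S_def by (metis empty_iff mem_Collect_eq order.refl less_imp_le)
  have pos: "x \<in> S \<Longrightarrow> 0 \<le> x" for x
  proof (rule ccontr)
    assume "x \<in> S" "\<not> 0 \<le> x"
    then show False using neg[of x] p by (auto simp: S_def)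
  qed
  have bdd: "bdd_below S" using pos by (auto intro!: bdd_belowI[of _ 0])
  show "0 \<le> quantile F p" unfolding Q using ne pos by (intro cInf_greatest) auto
  have inS: "Inf S \<in> S"
  proof (rule ccontr)
    assume "Inf S \<notin> S"
    then have lt: "F (Inf S) < p" by (auto simp: S_def)
    have "(F \<longlongrightarrow> F (Inf S)) (at_right (Inf S))" using rc[of "Inf S"] by (simp add: continuous_within)
    then have "eventually (\<lambda>y. F y < p) (at_right (Inf S))" using order_tendstoD(2) lt by blast
    then obtain b where b: "b > Inf S" "\<And>y. y > Inf S \<Longrightarrow> y < b \<Longrightarrow> F y < p"
      by (auto simp: eventually_at_right_field)
    obtain s where s: "s \<in> S" "s < b" using cInf_less_iff[OF ne bdd] b(1) by auto
    have "Inf S \<le> s" using cInf_lower[OF s(1) bdd] .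
    show False
    proof (cases "s = Inf S")
      case True then show False using s(1) \<open>Inf S \<notin> S\<close> by simp
    next
      case False
      then have "Inf S < s" using \<open>Inf S \<le> s\<close> by simp
      then have "F s < p" using b(2) s(2) by simp
      then show False using s(1) by (simp add: S_def)
    qed
  qed
  show "quantile F p \<le> x \<longleftrightarrow> p \<le> F x"
  proof
    assume "quantile F p \<le> x"
    then have "F (Inf S) \<le> F x" using mono Q by simp
    then show "p \<le> F x" using inS by (auto simp: S_def)
  next
    assume "p \<le> F x"
    then show "quantile F p \<le> x" unfolding Q by (intro cInf_lower bdd) (simp add: S_def)
  qed
qed

lemma event_eq_gen:
  assumes "1 \<le> k" "k \<le> N"
  shows "{\<omega> \<in> PiE {..<N} (\<lambda>_. UNIV). order_stat k N \<omega> \<le> x}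
       = (\<Union>S\<in>{S. S \<subseteq> {..<N} \<and> k \<le> card S}. PiE {..<N} (\<lambda>l. if l \<in> S then {..x} else {x<..}))"
proof (intro equalityI subsetI)
  fix \<omega> assume w: "\<omega> \<in> {\<omega> \<in> PiE {..<N} (\<lambda>_. UNIV). order_stat k N \<omega> \<le> x}"
  define S where "S = {l \<in> {..<N}. \<omega> l \<le> x}"
  have "k \<le> card S" using w order_stat_le_iff[OF assms] by (simp add: S_def)
  moreover have "\<omega> \<in> PiE {..<N} (\<lambda>l. if l \<in> S then {..x} else {x<..})" using w by (auto simp: S_def PiE_iff)
  moreover have "S \<in> {S. S \<subseteq> {..<N} \<and> k \<le> card S}" using \<open>k \<le> card S\<close> by (auto simp: S_def)
  ultimately show "\<omega> \<in> (\<Union>S\<in>{S. S \<subseteq> {..<N} \<and> k \<le> card S}. PiE {..<N} (\<lambda>l. if l \<in> S then {..x} else {x<..}))"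
    by blast
next
  fix \<omega> assume "\<omega> \<in> (\<Union>S\<in>{S. S \<subseteq> {..<N} \<and> k \<le> card S}. PiE {..<N} (\<lambda>l. if l \<in> S then {..x} else {x<..}))"
  then obtain S where S: "S \<subseteq> {..<N}" "k \<le> card S" and w: "\<omega> \<in> PiE {..<N} (\<lambda>l. if l \<in> S then {..x} else {x<..})" by auto
  have Seq: "{l \<in> {..<N}. \<omega> l \<le> x} = S"
    using w S by (auto simp: PiE_iff split: if_splits)
  have "\<omega> \<in> PiE {..<N} (\<lambda>_. UNIV)" using w by (auto simp: PiE_iff)
  moreover have "order_stat k N \<omega> \<le> x" using order_stat_le_iff[OF assms] Seq S by simp
  ultimately show "\<omega> \<in> {\<omega> \<in> PiE {..<N} (\<lambda>_. UNIV). order_stat k N \<omega> \<le> x}" by simp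
qed

lemma order_stat_meas_gen:
  assumes k: "1 \<le> k" "k \<le> N" and Ms: "sets Mb = sets borel"
  shows "order_stat k N \<in> borel_measurable (PiM {..<N} (\<lambda>_. Mb))"
proof (rule borel_measurableI_le)
  fix x
  have sp: "space Mb = UNIV" using sets_eq_imp_space_eq[OF Ms] by simp
  have "(\<Union>S\<in>{S. S \<subseteq> {..<N} \<and> k \<le> card S}. PiE {..<N} (\<lambda>l. if l \<in> S then {..x} else {x<..}))
     \<in> sets (PiM {..<N} (\<lambda>_. Mb))"
    by (intro sets.finite_UN sets_PiM_I_finite) (auto simp: Ms finite_Collect_subsets)
  then show "{\<omega> \<in> space (PiM {..<N} (\<lambda>_. Mb)). order_stat k N \<omega> \<le> x} \<in> sets (PiM {..<N} (\<lambda>_. Mb))"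
    using event_eq_gen[OF k, of x] by (simp add: space_PiM sp)
qed

theorem theorem15:
  fixes M :: "'a measure" and X :: "'a \<Rightarrow> real" and F :: "real \<Rightarrow> real"
    and i n j m :: nat
  assumes "prob_space M"
    and "X \<in> borel_measurable M"
    and "AE \<omega> in M. X \<omega> \<ge> 0"
    and "\<And>x. F x = measure M {\<omega> \<in> space M. X \<omega> \<le> x}"
    and "DDA F"
    and "1 \<le> i" "i \<le> n" "1 \<le> j" "j \<le> m"
    and "\<forall>r \<in> {x. 0 < x \<and> x < 1 \<and>
            x powr (real i - real j) * (1 - x) powr ((real n - real i) - (real m - real j))
              = Beta (real i) (real n - real i + 1) / Beta (real j) (real m - real j + 1)}.
          real i / real (n + 1) * (1 - F_B (i + 1) (n + 1) r)
          - real j / real (m + 1) * (1 - F_B (j + 1) (m + 1) r) \<ge> 0"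
  shows "ss_ge (order_stat_distr (distr M borel X) i n) (order_stat_distr (distr M borel X) j m)"
proof -
  note probM = assms(1) and Xm = assms(2) and Xnn = assms(3) and Fdef = assms(4) and dda = assms(5)
  note ij = assms(6-9) and hyp = assms(10)
  interpret M: prob_space M by (rule probM)
  define \<mu> where "\<mu> = distr M borel X"
  have mu_rd: "real_distribution \<mu>"
    unfolding real_distribution_def real_distribution_axioms_def \<mu>_def
    using M.prob_space_distr[OF Xm] by simp
  interpret mu: real_distribution \<mu> by (rule mu_rd)
  have Fcdf: "F x = cdf \<mu> x" for x
  proof -
    have "cdf \<mu> x = measure M (X -` {..x} \<inter> space M)"
      unfolding cdf_def \<mu>_def by (rule measure_distr[OF Xm]) simp
    also have "X -` {..x} \<inter> space M = {\<omega> \<in> space M. X \<omega> \<le> x}" by auto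
    finally show ?thesis using Fdef by simp
  qed
  have Fmono: "\<And>x y. x \<le> y \<Longrightarrow> F x \<le> F y" unfolding Fcdf by (rule mu.cdf_nondecreasing)
  have Frc: "\<And>a. continuous (at_right a) F" unfolding Fcdf[abs_def] by (rule mu.cdf_is_right_cont)
  have Ftop: "(F \<longlongrightarrow> 1) at_top" unfolding Fcdf[abs_def] by (rule mu.cdf_lim_at_top_prob)
  have Fneg: "F x = 0" if "x < 0" for x
  proof -
    have "AE \<omega> in M. \<not> X \<omega> \<le> x" using Xnn by eventually_elim (use that in auto)
    then have "emeasure M {\<omega> \<in> space M. X \<omega> \<le> x} = 0"
      by (subst (asm) AE_iff_measurable[OF _ refl]) (use Xm in auto)
    then show ?thesis unfolding Fdef by (simp add: M.emeasure_eq_measure)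
  qed
  have F01: "0 \<le> F x \<and> F x \<le> 1" for x unfolding Fcdf using mu.cdf_nonneg mu.cdf_bounded_prob by auto
  define Q where "Q = quantile F"
  have Qle: "Q p \<le> x \<longleftrightarrow> p \<le> F x" if "0 < p" "p < 1" for p x
    unfolding Q_def using quantile_props(1)[OF Fmono Frc Ftop Fneg that] by blast
  have Qnn: "0 \<le> Q p" if "0 < p" "p < 1" for p
    unfolding Q_def using quantile_props(2)[OF Fmono Frc Ftop Fneg that] by blast
  have Qmono: "Q p \<le> Q q" if "0 < p" "p \<le> q" "q < 1" for p q
  proof -
    have "q \<le> F (Q q)" using Qle[of q "Q q"] that by simp
    then show ?thesis using Qle[of p "Q q"] that by simp
  qed
  have Qmono_on: "mono_on {0<..<1} Q" by (intro mono_onI) (auto intro: Qmono)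
  define Q' where "Q' p = indicator {0<..<1} p *\<^sub>R Q p" for p
  have Q'Q: "p \<in> {0<..<1} \<Longrightarrow> Q' p = Q p" for p by (simp add: Q'_def)
  have Q'm[measurable]: "Q' \<in> borel_measurable borel"
  proof -
    have "Q \<in> borel_measurable (restrict_space borel {0<..<1})"
      by (rule borel_measurable_mono_on_fnc[OF Qmono_on])
    then show ?thesis unfolding Q'_def[abs_def]
      by (subst (asm) borel_measurable_restrict_space_iff) auto
  qed
  have Q'nn: "0 \<le> Q' p" for p using Qnn by (simp add: Q'_def indicator_def)
  have Q'mono_on: "mono_on {0<..<1} Q'" using Qmono_on by (simp add: mono_on_def Q'Q)
  have Q'U: "Q' \<in> measurable U borel"
    unfolding U_def by (intro measurable_restrict_space1) simp
  define D where "D = distr U borel Q'"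
  have D_rd: "real_distribution D"
    unfolding real_distribution_def real_distribution_axioms_def D_def
    using prob_space.prob_space_distr[OF U_prob Q'U] by simp
  have D_mu: "D = \<mu>"
  proof (rule cdf_unique[OF D_rd mu_rd])
    show "cdf D = cdf \<mu>"
    proof
      fix x
      have "cdf D x = measure U (Q' -` {..x} \<inter> space U)"
        unfolding cdf_def D_def by (rule measure_distr[OF Q'U]) simp
      also have "Q' -` {..x} \<inter> space U = {..F x} \<inter> {0<..<1}"
        using Qle by (auto simp: space_U Q'Q)
      also have "measure U ({..F x} \<inter> {0<..<1}) = F x"
        using measure_U_le[of "F x"] F01[of x] by (simp add: clp_def)
      finally show "cdf D x = cdf \<mu> x" using Fcdf by simp
    qed
  qed
  have sD: "sets D = sets borel" by (simp add: D_def)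
  have probD: "prob_space D" using D_rd by (simp add: real_distribution_def)
  have OD: "order_stat_distr \<mu> k N = distr (V k N) borel Q'" if k: "1 \<le> k" "k \<le> N" for k N
  proof -
    have Q'UD: "Q' \<in> measurable U D" using Q'U by (simp add: measurable_cong_sets[OF refl sD])
    have "distr (PiM {..<N} (\<lambda>_. U)) (PiM {..<N} (\<lambda>_. D)) (compose {..<N} Q')
        = PiM {..<N} (\<lambda>_. distr U D Q')"
      by (rule distr_PiM_finite_prob_space') (use U_prob probD Q'UD in auto)
    also have "distr U D Q' = D" unfolding D_def by (rule distr_cong) (auto simp: D_def)
    finally have PiD: "PiM {..<N} (\<lambda>_. D) = distr (PU N) (PiM {..<N} (\<lambda>_. D)) (compose {..<N} Q')"
      by (simp add: PU_def)
    have osm: "order_stat k N \<in> borel_measurable (PiM {..<N} (\<lambda>_. D))"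
      by (rule order_stat_meas_gen[OF k sD])
    have cm: "compose {..<N} Q' \<in> measurable (PU N) (PiM {..<N} (\<lambda>_. D))"
    proof -
      have "compose {..<N} Q' \<in> measurable (PiM {..<N} (\<lambda>_. U)) (PiM {..<N} (\<lambda>_. D))"
        unfolding compose_def using Q'UD
        by (intro measurable_restrict) (auto intro: measurable_compose[OF measurable_component_singleton])
      then show ?thesis by (simp add: PU_def)
    qed
    have "order_stat_distr \<mu> k N = distr (PiM {..<N} (\<lambda>_. D)) borel (order_stat k N)"
      unfolding order_stat_distr_def D_mu ..
    also have "\<dots> = distr (distr (PU N) (PiM {..<N} (\<lambda>_. D)) (compose {..<N} Q')) borel (order_stat k N)"
      by (subst PiD[symmetric]) (rule refl)
    also have "\<dots> = distr (PU N) borel (order_stat k N \<circ> compose {..<N} Q')"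
      by (rule distr_distr[OF osm cm])
    also have "\<dots> = distr (PU N) borel (Q' \<circ> order_stat k N)"
    proof (rule distr_cong[OF refl refl])
      fix \<omega> assume w: "\<omega> \<in> space (PU N)"
      have "order_stat k N (compose {..<N} Q' \<omega>) = order_stat k N (\<lambda>l. Q' (\<omega> l))"
        by (rule order_stat_cong) (simp add: compose_def)
      also have "\<dots> = Q' (order_stat k N \<omega>)"
        by (rule order_stat_mono_map[OF Q'mono_on _ k]) (use w in \<open>auto simp: space_PU PiE_iff\<close>)
      finally show "(order_stat k N \<circ> compose {..<N} Q') \<omega> = (Q' \<circ> order_stat k N) \<omega>" by simp
    qed
    also have "\<dots> = distr (V k N) borel Q'"
      unfolding V_def by (rule distr_distr[symmetric]) (auto intro: order_stat_meas[OF k])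
    finally show ?thesis .
  qed
  have INT: "(\<integral>\<^sup>+y. ennreal (u y) \<partial>order_stat_distr \<mu> k N)
      = (\<integral>\<^sup>+p. ennreal (indicator {0<..<1} p * dens k N p) * ennreal (u (Q' p)) \<partial>lborel)"
    if k: "1 \<le> k" "k \<le> N" and um: "u \<in> borel_measurable borel" for k N and u :: "real \<Rightarrow> real"
  proof -
    have "(\<integral>\<^sup>+y. ennreal (u y) \<partial>order_stat_distr \<mu> k N) = (\<integral>\<^sup>+p. ennreal (u (Q' p)) \<partial>V k N)"
      unfolding OD[OF k] by (rule nn_integral_distr) (use um in \<open>auto simp: V_def\<close>)
    also have "\<dots> = (\<integral>\<^sup>+p. ennreal (indicator {0<..<1} p * dens k N p) * ennreal (u (Q' p)) \<partial>lborel)"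
      by (rule V_integral[OF k]) (use um in simp)
    finally show ?thesis .
  qed
  have AEnn: "AE y in order_stat_distr \<mu> k N. 0 \<le> y" if k: "1 \<le> k" "k \<le> N" for k N
    unfolding OD[OF k] by (subst AE_distr_iff) (auto simp: V_def Q'nn)
  have Zpos: "\<And>x. 0 \<le> x \<Longrightarrow> x \<le> 1 \<Longrightarrow> 0 \<le> Zf i n j m x"
  proof (rule Z_nonneg[OF ij])
    fix r :: real assume r: "0 < r" "r < 1" and Dr: "dens i n r = dens j m r"
    have "r powr (real i - real j) * (1 - r) powr ((real n - real i) - (real m - real j))
      = Beta (real i) (real n - real i + 1) / Beta (real j) (real m - real j + 1)"
      by (rule R_eq[OF ij r Dr])
    then have "real i / real (n + 1) * (1 - F_B (i + 1) (n + 1) r)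
          - real j / real (m + 1) * (1 - F_B (j + 1) (m + 1) r) \<ge> 0"
      using hyp r by auto
    then show "0 \<le> Zf i n j m r"
      using FB_eq_G'[of i n r] FB_eq_G'[of j m r] ij r by (simp add: Zf_def)
  qed
  show ?thesis
    unfolding ss_ge_def \<mu>_def[symmetric]
  proof (intro allI impI, elim conjE)
    fix u :: "real \<Rightarrow> real"
    assume ss: "star_shaped_fun u" and intV: "integrable (order_stat_distr \<mu> i n) u"
      and intW: "integrable (order_stat_distr \<mu> j m) u"
    have u0: "u 0 = 0" and unn: "\<And>x. 0 \<le> x \<Longrightarrow> 0 \<le> u x"
      and ustar: "\<And>x y. 0 < x \<Longrightarrow> x \<le> y \<Longrightarrow> u x / x \<le> u y / y"
      using ss unfolding star_shaped_fun_def by auto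
    have um[measurable]: "u \<in> borel_measurable borel"
    proof -
      have "u \<in> borel_measurable (order_stat_distr \<mu> i n)" using intV by measurable
      then show ?thesis by (simp add: order_stat_distr_def)
    qed
    define h where "h p = indicator {0<..<1} p * (u (Q' p) / p)" for p
    have hm: "h \<in> borel_measurable borel" unfolding h_def[abs_def] by measurable
    have h0: "0 \<le> h p" for p using unn[OF Q'nn[of p]] by (auto simp: h_def indicator_def)
    have hmono: "h p \<le> h q" if pq: "0 < p" "p \<le> q" "q < 1" for p q
    proof -
      have hp: "h p = u (Q p) / p" and hq: "h q = u (Q q) / q" using pq by (auto simp: h_def Q'Q)
      show ?thesis
      proof (cases "Q p = 0")
        case True then show ?thesis using h0[of q] hp u0 by simp
      next
        case False
        then have Qp: "0 < Q p" using Qnn[of p] pq by simp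
        have Qq: "Q p \<le> Q q" using Qmono[OF pq] .
        have "u (Q p) / p = (u (Q p) / Q p) * (Q p / p)" using Qp by simp
        also have "\<dots> \<le> (u (Q q) / Q q) * (Q q / q)"
        proof (rule mult_mono)
          show "u (Q p) / Q p \<le> u (Q q) / Q q" by (rule ustar[OF Qp Qq])
          show "Q p / p \<le> Q q / q" using dda pq unfolding DDA_def Q_def by auto
          show "0 \<le> u (Q q) / Q q" using unn[of "Q q"] Qp Qq by simp
          show "0 \<le> Q p / p" using Qp pq by simp
        qed
        also have "\<dots> = u (Q q) / q" using Qp Qq by simp
        finally show ?thesis using hp hq by simp
      qed
    qed
    have rw: "(\<integral>\<^sup>+p. ennreal (indicator {0<..<1} p * dens k N p) * ennreal (u (Q' p)) \<partial>lborel)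
        = (\<integral>\<^sup>+p. ennreal (indicator {0<..<1} p * dens k N p) * ennreal (p * h p) \<partial>lborel)" for k N
      by (intro nn_integral_cong) (auto simp: h_def indicator_def)
    have le: "(\<integral>\<^sup>+y. ennreal (u y) \<partial>order_stat_distr \<mu> j m) \<le> (\<integral>\<^sup>+y. ennreal (u y) \<partial>order_stat_distr \<mu> i n)"
      unfolding INT[OF ij(3,4) um] INT[OF ij(1,2) um] rw
      by (rule layer_cake_compare[OF ij Zpos hm h0 hmono])
    have nnV: "AE y in order_stat_distr \<mu> i n. 0 \<le> u y"
      using AEnn[OF ij(1,2)] by eventually_elim (rule unn)
    have nnW: "AE y in order_stat_distr \<mu> j m. 0 \<le> u y"
      using AEnn[OF ij(3,4)] by eventually_elim (rule unn)
    have eV: "(\<integral>\<^sup>+y. ennreal (u y) \<partial>order_stat_distr \<mu> i n) = ennreal (\<integral>y. u y \<partial>order_stat_distr \<mu> i n)"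
      by (rule nn_integral_eq_integral[OF intV nnV])
    have eW: "(\<integral>\<^sup>+y. ennreal (u y) \<partial>order_stat_distr \<mu> j m) = ennreal (\<integral>y. u y \<partial>order_stat_distr \<mu> j m)"
      by (rule nn_integral_eq_integral[OF intW nnW])
    have pos: "0 \<le> (\<integral>y. u y \<partial>order_stat_distr \<mu> i n)" by (rule integral_nonneg_AE[OF nnV])
    show "(\<integral>y. u y \<partial>order_stat_distr \<mu> j m) \<le> (\<integral>y. u y \<partial>order_stat_distr \<mu> i n)"
      using le unfolding eV eW using pos by (simp add: ennreal_le_iff)
  qed
qed

end
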